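(* Let $N\ge 3$. There exists a subset $\mathbb{S}\subset\mathbb{R}_+$ which is dense in $\mathbb{R}_+$ such that for every $M\in\mathbb{S}$ the equation $$V_{ss}+(5-N)V_s s^{-1}+\tfrac12 V_s s^{-3}-V_sVs^{-1}-2(N-2)Vs^{-2}+(N-2)V^2s^{-2}=0$$ admits a local solution $V$ with $V(0)=M$, i.e. there is $L>0$ and $V\in C([0,L])\cap C^2((0,L))$ satisfying the equation on $(0,L)$ with $V(0)=M$.
   Context: $\mathbb{R}_+=(0,\infty)$. This equation arises from the stationary self-similar equation $\phi_{\xi\xi}+(\frac{N+1}{\xi}-\frac{\xi}{2})\phi_\xi-\phi+\phi(\xi\phi_\xi+N\phi)=0$ via $V(s)=\phi(\xi)\xi^2$, $s=1/\xi$. *)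

theory Defs
  imports "HOL-Analysis.Analysis"
begin

definition local_solution :: "nat \<Rightarrow> real \<Rightarrow> real \<Rightarrow> (real \<Rightarrow> real) \<Rightarrow> bool" where
  "local_solution N M L V \<longleftrightarrow>
     L > 0 \<and> continuous_on {0..L} V \<and> V 0 = M \<and>
     (\<exists>V1 V2. (\<forall>s\<in>{0<..<L}. (V has_real_derivative V1 s) (at s) \<and>
                              (V1 has_real_derivative V2 s) (at s)) \<and>
              continuous_on {0<..<L} V2 \<and>
              (\<forall>s\<in>{0<..<L}.
                 V2 s + (5 - real N) * V1 s / s + V1 s / (2 * s ^ 3) - V1 s * V s / s
                 - 2 * (real N - 2) * V s / s\<^sup>2 + (real N - 2) * (V s)\<^sup>2 / s\<^sup>2 = 0))"

end

theory Submission
  imports Defs "HOL-Real_Asymp.Real_Asymp"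
begin


definition kh :: "real \<Rightarrow> real" where "kh t = t * exp (-1/(4*t^2))"
definition kd :: "real \<Rightarrow> real" where
  "kd t = (if t = 0 then 0 else exp (-1/(4*t^2)) * (1 + 1/(2*t^2)))"

lemma kd_lim0: "((\<lambda>t::real. exp (-1/(4*t^2)) * (1 + 1/(2*t^2))) \<longlongrightarrow> 0) (at 0)"
  by real_asymp

lemma kh_lim0: "((\<lambda>t::real. t * exp (-1/(4*t^2))) \<longlongrightarrow> 0) (at 0)"
  by real_asymp

lemma isCont_kd: "isCont kd x"
proof (cases "x = 0")
  case True
  have "(kd \<longlongrightarrow> 0) (at 0)"
    using kd_lim0 by (rule Lim_transform_eventually) (auto simp: eventually_at_filter kd_def)
  then show ?thesis using True by (simp add: isCont_def kd_def)
next
  case False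
  have c: "isCont (\<lambda>t. exp (-1/(4*t^2)) * (1 + 1/(2*t^2))) x"
    using False by (intro continuous_intros) auto
  have e: "\<forall>\<^sub>F t in nhds x. exp (-1/(4*t^2)) * (1 + 1/(2*t^2)) = kd t"
    using t1_space_nhds[OF False] by eventually_elim (simp add: kd_def)
  show ?thesis using isCont_cong[OF e] c by simp
qed

lemma isCont_kh: "isCont kh x"
proof (cases "x = 0")
  case True
  then show ?thesis using kh_lim0 by (simp add: isCont_def kh_def[abs_def])
next
  case False
  then show ?thesis unfolding kh_def[abs_def] by (intro continuous_intros) auto
qed

lemma kh_deriv: "t \<noteq> 0 \<Longrightarrow> (kh has_real_derivative kd t) (at t)"
  unfolding kh_def[abs_def] kd_def
  apply (auto intro!: derivative_eq_intros)
  apply (simp add: field_simps power2_eq_square power3_eq_cube eval_nat_numeral)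
  done

lemma kh_0[simp]: "kh 0 = 0" by (simp add: kh_def)
lemma kh_pos: "s > 0 \<Longrightarrow> kh s > 0" by (simp add: kh_def)
lemma kd_nonneg: "kd t \<ge> 0" by (simp add: kd_def)

lemma kd_integral: assumes "0 \<le> s" shows "(kd has_integral kh s) {0..s}"
proof -
  have "(kd has_integral (kh s - kh 0)) {0..s}"
  proof (rule fundamental_theorem_of_calculus_interior[OF assms])
    show "continuous_on {0..s} kh" using isCont_kh by (simp add: continuous_at_imp_continuous_on)
    fix x assume "x \<in> {0<..<s}"
    then have "x \<noteq> 0" by auto
    then show "(kh has_vector_derivative kd x) (at x)"
      using kh_deriv has_real_derivative_iff_has_vector_derivative by blast
  qed
  then show ?thesis by simp
qed

lemma cont_kd_mult: "continuous_on S f \<Longrightarrow> continuous_on S (\<lambda>t. kd t * f t)"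
proof -
  assume "continuous_on S f"
  moreover have "continuous_on S kd" by (simp add: continuous_at_imp_continuous_on isCont_kd)
  ultimately show ?thesis by (rule continuous_on_mult[rotated])
qed

lemma kd_int_eq: "0 \<le> s \<Longrightarrow> integral {0..s} kd = kh s"
  using kd_integral by (rule integral_unique)

definition Aop :: "(real \<Rightarrow> real) \<Rightarrow> real \<Rightarrow> real" where
  "Aop f s = (if s = 0 then f 0 else integral {0..s} (\<lambda>t. kd t * f t) / kh s)"

lemma A_bound:
  assumes "continuous_on {0..s} f" "0 \<le> s" "\<And>t. t \<in> {0..s} \<Longrightarrow> \<bar>f t\<bar> \<le> B"
  shows "\<bar>Aop f s\<bar> \<le> B"
proof (cases "s = 0")
  case True then show ?thesis using assms(3)[of 0] by (simp add: Aop_def)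
next
  case False
  then have s: "s > 0" using assms(2) by auto
  have i1: "(\<lambda>t. kd t * f t) integrable_on {0..s}"
    by (intro integrable_continuous_interval cont_kd_mult assms(1))
  have h2: "((\<lambda>t. kd t * B) has_integral (kh s * B)) {0..s}"
    by (intro has_integral_mult_left kd_integral) (use s in auto)
  have "norm (integral {0..s} (\<lambda>t. kd t * f t)) \<le> integral {0..s} (\<lambda>t. kd t * B)"
  proof (rule integral_norm_bound_integral[OF i1])
    show "(\<lambda>t. kd t * B) integrable_on {0..s}" using h2 by (rule has_integral_integrable)
    fix t assume t: "t \<in> {0..s}"
    have "\<bar>f t\<bar> \<le> B" using assms(3) t .
    then have "kd t * \<bar>f t\<bar> \<le> kd t * B" by (rule mult_left_mono[OF _ kd_nonneg])
    then show "norm (kd t * f t) \<le> kd t * B"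
      by (simp add: abs_mult abs_of_nonneg[OF kd_nonneg])
  qed
  also have "\<dots> = kh s * B" using h2 by (rule integral_unique)
  finally have I: "\<bar>integral {0..s} (\<lambda>t. kd t * f t)\<bar> \<le> kh s * B" by simp
  have kp: "kh s > 0" using kh_pos[OF s] .
  have "\<bar>Aop f s\<bar> = \<bar>integral {0..s} (\<lambda>t. kd t * f t)\<bar> / kh s"
    using False kp by (simp add: Aop_def abs_divide)
  also have "\<dots> \<le> (kh s * B) / kh s"
    by (rule divide_right_mono[OF I less_imp_le[OF kp]])
  also have "\<dots> = B" using kp by simp
  finally show ?thesis .
qed

lemma A_const: "s \<ge> 0 \<Longrightarrow> Aop (\<lambda>t. C) s = C"
proof (cases "s = 0")
  case False
  assume "s \<ge> 0"
  then have s: "s > 0" using False by auto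
  have "((\<lambda>t. kd t * C) has_integral (kh s * C)) {0..s}"
    by (intro has_integral_mult_left kd_integral) (use s in auto)
  then show ?thesis using False kh_pos[OF s] s by (simp add: Aop_def kd_int_eq)
qed (simp add: Aop_def)

lemma A_diff:
  assumes "continuous_on {0..s} f" "continuous_on {0..s} g"
  shows "Aop (\<lambda>t. f t - g t) s = Aop f s - Aop g s"
proof -
  have "integral {0..s} (\<lambda>t. kd t * (f t - g t)) =
        integral {0..s} (\<lambda>t. kd t * f t) - integral {0..s} (\<lambda>t. kd t * g t)"
    unfolding right_diff_distrib
    by (intro integral_diff integrable_continuous_interval cont_kd_mult assms)
  then show ?thesis by (simp add: Aop_def diff_divide_distrib)
qed

lemma A_cont:
  assumes f: "continuous_on {0..L} f"
  shows "continuous_on {0..L} (Aop f)"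
proof (rule continuous_on_eq_continuous_within[THEN iffD2], intro ballI)
  fix x assume x: "x \<in> {0..L}"
  show "continuous (at x within {0..L}) (Aop f)"
  proof (cases "x = 0")
    case False
    define I where "I = (\<lambda>s. integral {0..s} (\<lambda>t. kd t * f t))"
    have cI: "continuous_on {0..L} I" unfolding I_def
      by (intro indefinite_integral_continuous_1 integrable_continuous_interval cont_kd_mult f)
    have "continuous (at x within {0..L}) I"
      by (rule continuous_on_imp_continuous_within[OF cI order_refl x])
    then have "(I \<longlongrightarrow> I x) (at x within {0..L})"
      by (simp add: continuous_within)
    moreover have "(kh \<longlongrightarrow> kh x) (at x within {0..L})"
      using isCont_kh[of x] unfolding isCont_def by (rule tendsto_within_subset) simp
    moreover have "kh x \<noteq> 0" using False x kh_pos[of x] by auto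
    ultimately have lim: "((\<lambda>s. I s / kh s) \<longlongrightarrow> I x / kh x) (at x within {0..L})"
      by (intro tendsto_divide)
    have ev: "\<forall>\<^sub>F s in at x within {0..L}. I s / kh s = Aop f s"
    proof -
      have "\<forall>\<^sub>F s in nhds x. s \<noteq> 0" using t1_space_nhds[OF False] .
      then have "\<forall>\<^sub>F s in at x within {0..L}. s \<noteq> 0"
        by (rule filter_leD[OF at_within_le_nhds])
      then show ?thesis by eventually_elim (simp add: Aop_def I_def)
    qed
    have "(Aop f \<longlongrightarrow> Aop f x) (at x within {0..L})"
      using Lim_transform_eventually[OF lim ev] False by (simp add: Aop_def[of f x] I_def)
    then show ?thesis by (simp add: continuous_within)
  next
    case True
    have cf0: "continuous (at 0 within {0..L}) f"
      using continuous_on_imp_continuous_within[OF f order_refl, of 0] x True by simp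
    show ?thesis unfolding True continuous_within_eps_delta
    proof (intro allI impI)
      fix e :: real assume e: "e > 0"
      then obtain d where d: "d > 0" "\<And>t. t \<in> {0..L} \<Longrightarrow> dist t 0 < d \<Longrightarrow> dist (f t) (f 0) < e/2"
      proof -
        have "e/2 > 0" using e by simp
        then show ?thesis using cf0[unfolded continuous_within_eps_delta] that by blast
      qed
      show "\<exists>d>0. \<forall>s\<in>{0..L}. dist s 0 < d \<longrightarrow> dist (Aop f s) (Aop f 0) < e"
      proof (intro exI[of _ d] conjI ballI impI)
        show "0 < d" using d(1) .
      next
        fix s assume s: "s \<in> {0..L}" "dist s 0 < d"
        have fs: "continuous_on {0..s} f" by (rule continuous_on_subset[OF f]) (use s in auto)
        have "Aop (\<lambda>t. f t - f 0) s = Aop f s - Aop (\<lambda>t. f 0) s"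
          by (rule A_diff[OF fs]) (intro continuous_intros)
        also have "Aop (\<lambda>t. f 0) s = f 0" using s by (intro A_const) auto
        finally have eq: "Aop f s - f 0 = Aop (\<lambda>t. f t - f 0) s" by simp
        have "\<bar>Aop (\<lambda>t. f t - f 0) s\<bar> \<le> e/2"
        proof (rule A_bound)
          show "continuous_on {0..s} (\<lambda>t. f t - f 0)" using fs by (intro continuous_intros)
          show "0 \<le> s" using s by auto
          fix t assume t: "t \<in> {0..s}"
          then have "dist (f t) (f 0) < e/2" using s by (intro d(2)) (auto simp: dist_real_def)
          then show "\<bar>f t - f 0\<bar> \<le> e / 2" by (simp add: dist_real_def)
        qed
        then show "dist (Aop f s) (Aop f 0) < e" using eq e by (simp add: dist_real_def Aop_def[of f 0])
      qed
    qed
  qed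
qed



lemma div_ge1: assumes "(0::real) \<le> a" "1 \<le> d" shows "a / d \<le> a"
proof -
  have "a * 1 \<le> a * d" using mult_left_mono[OF assms(2) assms(1)] .
  then show ?thesis using assms(2) by (simp add: pos_divide_le_eq)
qed

lemma lin_aux: "(A'::real) \<le> a + b \<Longrightarrow> a \<le> X \<Longrightarrow> b \<le> R / 4 \<Longrightarrow> R = 4 * X + 1 \<Longrightarrow> 2 * A' \<le> R"
  by linarith

lemma int_tg_bound:
  fixes g :: "real \<Rightarrow> real"
  assumes g: "continuous_on UNIV g" and b: "\<And>x. \<bar>g x\<bar> \<le> D" and t: "0 \<le> t"
  shows "\<bar>integral {0..t} (\<lambda>\<tau>. \<tau> * g \<tau>)\<bar> \<le> t * t * D"
proof -
  have D: "0 \<le> D" using abs_ge_zero[of "g 0"] b[of 0] by linarith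
  have c: "continuous_on {0..t} (\<lambda>\<tau>. \<tau> * g \<tau>)"
    by (rule continuous_on_mult[OF continuous_on_id continuous_on_subset[OF g]]) auto
  have i: "((\<lambda>\<tau>. \<tau> * g \<tau>) has_integral integral {0..t} (\<lambda>\<tau>. \<tau> * g \<tau>)) (cbox 0 t)"
    using integrable_integral[OF integrable_continuous_interval[OF c]] by simp
  have "norm (integral {0..t} (\<lambda>\<tau>. \<tau> * g \<tau>)) \<le> (t * D) * measure lborel (cbox 0 t)"
  proof (rule has_integral_bound[OF _ i])
    show "0 \<le> t * D" using t D by simp
    fix x assume x: "x \<in> cbox 0 t"
    then have x0: "0 \<le> x" "x \<le> t" by auto
    have "\<bar>x\<bar> * \<bar>g x\<bar> \<le> t * D" by (rule mult_mono) (use x0 b[of x] t in auto)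
    then show "norm (x * g x) \<le> t * D" by (simp add: abs_mult)
  qed
  then show ?thesis using t by (simp add: mult_ac)
qed

lemma rho_bound:
  fixes c M V w t L n R :: real
  assumes c: "c \<ge> 0" and V: "\<bar>V - M\<bar> \<le> 1" and w: "\<bar>w\<bar> \<le> R" and t: "t^2 \<le> L^2"
    and L: "L^2 * (\<bar>M\<bar> + 1 + \<bar>5 - n\<bar>) \<le> 1/4"
    and R: "R = 4 * (c * (\<bar>M\<bar> + 1) * (\<bar>M\<bar> + 3)) + 1"
  shows "\<bar>2 * (c * V * (2 - V) + t^2 * (V - (5 - n)) * w) / (1 + 2 * t^2)\<bar> \<le> R"
proof -
  define Q where "Q = \<bar>M\<bar> + 1 + \<bar>5 - n\<bar>"
  have V1: "\<bar>V\<bar> \<le> \<bar>M\<bar> + 1" using V by linarith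
  have V2: "\<bar>2 - V\<bar> \<le> \<bar>M\<bar> + 3" using V by linarith
  have V3: "\<bar>V - (5 - n)\<bar> \<le> Q" using V unfolding Q_def by linarith
  have R0: "R \<ge> 0" using w by linarith
  have "\<bar>c * V * (2 - V)\<bar> = c * (\<bar>V\<bar> * \<bar>2 - V\<bar>)" using c by (simp add: abs_mult)
  also have "\<dots> \<le> c * ((\<bar>M\<bar> + 1) * (\<bar>M\<bar> + 3))"
    by (intro mult_left_mono mult_mono V1 V2 c) auto
  finally have a1: "\<bar>c * V * (2 - V)\<bar> \<le> c * (\<bar>M\<bar> + 1) * (\<bar>M\<bar> + 3)" by (simp add: mult_ac)
  have "\<bar>t^2 * (V - (5 - n)) * w\<bar> = t^2 * (\<bar>V - (5 - n)\<bar> * \<bar>w\<bar>)" by (simp add: abs_mult)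
  also have "\<dots> \<le> L^2 * (Q * R)"
    by (intro mult_mono V3 w t) (auto simp: Q_def)
  also have "\<dots> = (L^2 * Q) * R" by simp
  also have "\<dots> \<le> (1/4) * R" using L R0 unfolding Q_def by (intro mult_right_mono) auto
  finally have a2: "\<bar>t^2 * (V - (5 - n)) * w\<bar> \<le> R / 4" by simp
  have tri: "\<bar>c * V * (2 - V) + t^2 * (V - (5 - n)) * w\<bar> \<le> \<bar>c * V * (2 - V)\<bar> + \<bar>t^2 * (V - (5 - n)) * w\<bar>"
    by (rule abs_triangle_ineq)
  have num: "2 * \<bar>c * V * (2 - V) + t^2 * (V - (5 - n)) * w\<bar> \<le> R"
    by (rule lin_aux[OF tri a1 a2 R])
  have den: "1 + 2 * t^2 \<ge> 1" by simp
  have "\<bar>2 * (c * V * (2 - V) + t^2 * (V - (5 - n)) * w) / (1 + 2 * t^2)\<bar>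
      = 2 * \<bar>c * V * (2 - V) + t^2 * (V - (5 - n)) * w\<bar> / (1 + 2 * t^2)"
  proof -
    have "\<bar>1 + 2 * t^2\<bar> = 1 + 2 * t^2" using den by simp
    then show ?thesis by (simp only: abs_divide abs_mult abs_numeral)
  qed
  also have "\<dots> \<le> 2 * \<bar>c * V * (2 - V) + t^2 * (V - (5 - n)) * w\<bar>"
    by (rule div_ge1[OF _ den]) simp
  finally show ?thesis using num by linarith
qed

lemma rho_contr:
  fixes c M V1 V2 w1 w2 t L n R D K :: real
  assumes c: "c \<ge> 0" and V1: "\<bar>V1 - M\<bar> \<le> 1" and V2: "\<bar>V2 - M\<bar> \<le> 1" and w1: "\<bar>w1\<bar> \<le> R"
    and dV: "\<bar>V1 - V2\<bar> \<le> t^2 * D" and dw: "\<bar>w1 - w2\<bar> \<le> D" and t: "t^2 \<le> L^2"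
    and LR: "L^2 * R \<le> 1" and K: "K = c * (2 * \<bar>M\<bar> + 4) + 1 + (\<bar>M\<bar> + 1 + \<bar>5 - n\<bar>)"
    and LK: "4 * L^2 * K \<le> 1"
  shows "\<bar>2 * (c * V1 * (2 - V1) + t^2 * (V1 - (5 - n)) * w1) / (1 + 2 * t^2)
          - 2 * (c * V2 * (2 - V2) + t^2 * (V2 - (5 - n)) * w2) / (1 + 2 * t^2)\<bar> \<le> D / 2"
proof -
  define Q where "Q = \<bar>M\<bar> + 1 + \<bar>5 - n\<bar>"
  have D0: "D \<ge> 0" using dw abs_ge_zero[of "w1 - w2"] by linarith
  have R0: "R \<ge> 0" using w1 abs_ge_zero[of w1] by linarith
  have t0: "t^2 \<ge> 0" by simp
  have L0: "L^2 \<ge> 0" by simp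
  have dV': "\<bar>V1 - V2\<bar> \<le> L^2 * D" using dV mult_right_mono[OF t D0] by linarith
  have s12: "\<bar>2 - V1 - V2\<bar> \<le> 2 * \<bar>M\<bar> + 4" using V1 V2 by linarith
  have q2: "\<bar>V2 - (5 - n)\<bar> \<le> Q" using V2 unfolding Q_def by linarith
  have id: "(c * V1 * (2 - V1) + t^2 * (V1 - (5 - n)) * w1) - (c * V2 * (2 - V2) + t^2 * (V2 - (5 - n)) * w2)
      = c * ((V1 - V2) * (2 - V1 - V2)) + t^2 * (V1 - V2) * w1 + t^2 * (V2 - (5 - n)) * (w1 - w2)"
    by (simp add: algebra_simps)
  have e1: "\<bar>c * ((V1 - V2) * (2 - V1 - V2))\<bar> \<le> c * ((L^2 * D) * (2 * \<bar>M\<bar> + 4))"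
  proof -
    have "\<bar>V1 - V2\<bar> * \<bar>2 - V1 - V2\<bar> \<le> (L^2 * D) * (2 * \<bar>M\<bar> + 4)"
      by (rule mult_mono[OF dV' s12]) (use L0 D0 in auto)
    then show ?thesis using c by (simp add: abs_mult mult_left_mono)
  qed
  have e2: "\<bar>t^2 * (V1 - V2) * w1\<bar> \<le> L^2 * D"
  proof -
    have "\<bar>t^2 * (V1 - V2) * w1\<bar> = t^2 * (\<bar>V1 - V2\<bar> * \<bar>w1\<bar>)" by (simp add: abs_mult)
    also have "\<dots> \<le> L^2 * ((L^2 * D) * R)"
      by (intro mult_mono t dV' w1) (use L0 D0 R0 in auto)
    also have "\<dots> = (L^2 * D) * (L^2 * R)" by (simp add: mult_ac)
    also have "\<dots> \<le> (L^2 * D) * 1" by (rule mult_left_mono[OF LR]) (use L0 D0 in auto)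
    finally show ?thesis by simp
  qed
  have e3: "\<bar>t^2 * (V2 - (5 - n)) * (w1 - w2)\<bar> \<le> L^2 * (Q * D)"
  proof -
    have "\<bar>t^2 * (V2 - (5 - n)) * (w1 - w2)\<bar> = t^2 * (\<bar>V2 - (5 - n)\<bar> * \<bar>w1 - w2\<bar>)" by (simp add: abs_mult)
    also have "\<dots> \<le> L^2 * (Q * D)"
      by (intro mult_mono t q2 dw) (use L0 D0 in \<open>auto simp: Q_def\<close>)
    finally show ?thesis .
  qed
  have tot: "\<bar>(c * V1 * (2 - V1) + t^2 * (V1 - (5 - n)) * w1) - (c * V2 * (2 - V2) + t^2 * (V2 - (5 - n)) * w2)\<bar>
      \<le> (L^2 * D) * K"
  proof -
    have "\<bar>c * ((V1 - V2) * (2 - V1 - V2)) + t^2 * (V1 - V2) * w1 + t^2 * (V2 - (5 - n)) * (w1 - w2)\<bar>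
       \<le> \<bar>c * ((V1 - V2) * (2 - V1 - V2))\<bar> + \<bar>t^2 * (V1 - V2) * w1\<bar> + \<bar>t^2 * (V2 - (5 - n)) * (w1 - w2)\<bar>"
      by (rule order_trans[OF abs_triangle_ineq add_right_mono[OF abs_triangle_ineq]])
    also have "\<dots> \<le> c * ((L^2 * D) * (2 * \<bar>M\<bar> + 4)) + L^2 * D + L^2 * (Q * D)"
      using e1 e2 e3 by linarith
    also have "\<dots> = (L^2 * D) * K" unfolding K Q_def by (simp add: algebra_simps)
    finally show ?thesis unfolding id .
  qed
  define A where "A = (c * V1 * (2 - V1) + t^2 * (V1 - (5 - n)) * w1) - (c * V2 * (2 - V2) + t^2 * (V2 - (5 - n)) * w2)"
  have den: "1 + 2 * t^2 \<ge> 1" by simp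
  have "2 * (c * V1 * (2 - V1) + t^2 * (V1 - (5 - n)) * w1) / (1 + 2 * t^2)
          - 2 * (c * V2 * (2 - V2) + t^2 * (V2 - (5 - n)) * w2) / (1 + 2 * t^2) = (2 * A) / (1 + 2 * t^2)"
    unfolding A_def by (simp add: diff_divide_distrib right_diff_distrib)
  moreover have "\<bar>(2 * A) / (1 + 2 * t^2)\<bar> \<le> 2 * \<bar>A\<bar>"
  proof -
    have "\<bar>1 + 2 * t^2\<bar> = 1 + 2 * t^2" using den by simp
    then have "\<bar>(2 * A) / (1 + 2 * t^2)\<bar> = (2 * \<bar>A\<bar>) / (1 + 2 * t^2)"
      by (simp only: abs_divide abs_mult abs_numeral)
    also have "\<dots> \<le> 2 * \<bar>A\<bar>" by (rule div_ge1[OF _ den]) simp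
    finally show ?thesis .
  qed
  moreover have "2 * \<bar>A\<bar> \<le> D / 2"
  proof -
    have "2 * \<bar>A\<bar> \<le> 2 * ((L^2 * D) * K)" unfolding A_def by (rule mult_left_mono[OF tot]) simp
    also have "\<dots> = (4 * L^2 * K) * D / 2" by (simp add: algebra_simps)
    also have "\<dots> \<le> 1 * D / 2" using mult_right_mono[OF LK D0] by (simp add: divide_right_mono mult_ac)
    finally show ?thesis by simp
  qed
  ultimately show ?thesis by linarith
qed



definition Vw :: "real \<Rightarrow> (real \<Rightarrow> real) \<Rightarrow> real \<Rightarrow> real" where
  "Vw M w s = M + integral {0..s} (\<lambda>t. t * w t)"
definition rho :: "real \<Rightarrow> real \<Rightarrow> (real \<Rightarrow> real) \<Rightarrow> real \<Rightarrow> real" where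
  "rho n M w t = (n - 2) * Vw M w t * (2 - Vw M w t) + t^2 * (Vw M w t - (5 - n)) * w t"
definition rhoh :: "real \<Rightarrow> real \<Rightarrow> (real \<Rightarrow> real) \<Rightarrow> real \<Rightarrow> real" where
  "rhoh n M w t = 2 * rho n M w t / (1 + 2 * t^2)"
definition clampL :: "real \<Rightarrow> real \<Rightarrow> real" where
  "clampL L x = max 0 (min L x)"
definition Tfun :: "real \<Rightarrow> real \<Rightarrow> real \<Rightarrow> (real \<Rightarrow> real) \<Rightarrow> real \<Rightarrow> real" where
  "Tfun n M L w x = Aop (rhoh n M w) (clampL L x)"

lemma cont_tw: "continuous_on UNIV w \<Longrightarrow> continuous_on S (\<lambda>t::real. t * w t)"
  by (rule continuous_on_mult[OF continuous_on_id continuous_on_subset]) auto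

lemma Vw_cont: "continuous_on UNIV w \<Longrightarrow> continuous_on {0..L} (Vw M w)"
proof -
  assume w: "continuous_on UNIV w"
  have "continuous_on {0..L} (\<lambda>s. integral {0..s} (\<lambda>t. t * w t))"
    by (intro indefinite_integral_continuous_1 integrable_continuous_interval cont_tw w)
  then have "continuous_on {0..L} (\<lambda>s. M + integral {0..s} (\<lambda>t. t * w t))"
    by (rule continuous_on_add[OF continuous_on_const])
  then show ?thesis by (simp add: Vw_def[abs_def])
qed

lemma rho_cont: "continuous_on UNIV w \<Longrightarrow> continuous_on {0..L} (rho n M w)"
proof -
  assume w: "continuous_on UNIV w"
  have V: "continuous_on {0..L} (Vw M w)" using Vw_cont[OF w] .
  have w': "continuous_on {0..L} w" using continuous_on_subset[OF w] by auto
  show ?thesis unfolding rho_def[abs_def]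
    by (intro continuous_intros V w')
qed

lemma rhoh_cont: "continuous_on UNIV w \<Longrightarrow> continuous_on {0..L} (rhoh n M w)"
proof -
  assume w: "continuous_on UNIV w"
  have r: "continuous_on {0..L} (rho n M w)" using rho_cont[OF w] .
  have nz: "\<And>t::real. 1 + 2 * t^2 \<noteq> 0"
  proof -
    fix t :: real have "0 \<le> t^2" by simp
    then show "1 + 2 * t^2 \<noteq> 0" by linarith
  qed
  have "continuous_on {0..L} (\<lambda>t. 2 * rho n M w t / (1 + 2 * t^2))"
    by (intro continuous_intros r) (use nz in auto)
  then show ?thesis by (simp add: rhoh_def[abs_def])
qed

lemma clamp_in: "0 \<le> L \<Longrightarrow> clampL L x \<in> {0..L}"
  by (auto simp: clampL_def)

lemma clamp_id: "x \<in> {0..L} \<Longrightarrow> clampL L x = x"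
  by (auto simp: clampL_def)

lemma Tfun_cont:
  assumes w: "continuous_on UNIV w" and L: "0 \<le> L"
  shows "continuous_on UNIV (Tfun n M L w)"
proof -
  have c1: "continuous_on {0..L} (Aop (rhoh n M w))" by (rule A_cont[OF rhoh_cont[OF w]])
  have c2: "continuous_on UNIV (clampL L)" unfolding clampL_def[abs_def]
    by (intro continuous_intros)
  have "continuous_on UNIV (\<lambda>x. Aop (rhoh n M w) (clampL L x))"
    by (rule continuous_on_compose2[OF c1 c2]) (use clamp_in[OF L] in auto)
  then show ?thesis by (simp add: Tfun_def[abs_def])
qed

lemma Vw_bound:
  assumes w: "continuous_on UNIV w" and b: "\<And>x. \<bar>w x\<bar> \<le> R" and t: "0 \<le> t"
  shows "\<bar>Vw M w t - M\<bar> \<le> t * t * R"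
  using int_tg_bound[OF w b t] by (simp add: Vw_def)

lemma Vw_diff:
  assumes w1: "continuous_on UNIV w1" and w2: "continuous_on UNIV w2"
    and b: "\<And>x. \<bar>w1 x - w2 x\<bar> \<le> D" and t: "0 \<le> t"
  shows "\<bar>Vw M w1 t - Vw M w2 t\<bar> \<le> t * t * D"
proof -
  have "integral {0..t} (\<lambda>\<tau>. \<tau> * (w1 \<tau> - w2 \<tau>)) =
        integral {0..t} (\<lambda>\<tau>. \<tau> * w1 \<tau>) - integral {0..t} (\<lambda>\<tau>. \<tau> * w2 \<tau>)"
    unfolding right_diff_distrib
    by (intro integral_diff integrable_continuous_interval cont_tw w1 w2)
  moreover have "\<bar>integral {0..t} (\<lambda>\<tau>. \<tau> * (w1 \<tau> - w2 \<tau>))\<bar> \<le> t * t * D"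
    by (rule int_tg_bound[OF continuous_on_diff[OF w1 w2] b t])
  ultimately show ?thesis by (simp add: Vw_def)
qed

lemma alg_deriv0:
  fixes s e J rh k :: real
  assumes s: "s > 0" and e: "e > 0" and k: "k = 1 + 2 * s^2"
  shows "1 * (J / (s * e)) + ((e * e * rh / s - J * (e * k / (2 * s^2))) / ((s * e) * (s * e))) * s
         = rh / s^2 - (J / (s * e)) / (2 * s^2)"
proof -
  have "1 * (J / (s * e)) + ((e * e * rh / s - J * (e * k / (2 * s^2))) / ((s * e) * (s * e))) * s
       = (2 * s^2 * J + 2 * e * s * rh - J * k) / (2 * s^3 * e)"
    using s e by (simp add: field_simps power2_eq_square power3_eq_cube)
  also have "\<dots> = (J * (2 * s^2 - k) + 2 * e * s * rh) / (2 * s^3 * e)"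
    by (simp add: algebra_simps)
  also have "\<dots> = (2 * e * s * rh - J) / (2 * s^3 * e)" unfolding k by simp
  also have "\<dots> = rh / s^2 - (J / (s * e)) / (2 * s^2)"
    using s e by (simp add: field_simps power2_eq_square power3_eq_cube)
  finally show ?thesis .
qed

lemma alg_deriv:
  fixes s e J rh :: real
  assumes s: "s > 0" and e: "e > 0"
  shows "1 * (J / (s * e)) + ((e * (1 + 1 / (2 * s^2)) * (2 * rh / (1 + 2 * s^2)) * (s * e)
           - J * (e * (1 + 1 / (2 * s^2)))) / ((s * e) * (s * e))) * s
         = rh / s^2 - (J / (s * e)) / (2 * s^2)"
proof -
  define k where "k = 1 + 2 * s^2"
  have kp: "k > 0" unfolding k_def by (simp add: add_pos_nonneg)
  have a: "1 + 1 / (2 * s^2) = k / (2 * s^2)" using s unfolding k_def by (simp add: field_simps)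
  have b: "e * (k / (2 * s^2)) * (2 * rh / k) * (s * e) = e * e * rh / s"
    using s kp by (simp add: field_simps power2_eq_square)
  have c: "J * (e * (k / (2 * s^2))) = J * (e * k / (2 * s^2))" by simp
  show ?thesis unfolding a k_def[symmetric] b c by (rule alg_deriv0[OF s e k_def])
qed

lemma alg_eq:
  fixes s V w n :: real
  assumes s: "s > 0"
  shows "((n - 2) * V * (2 - V) + s^2 * (V - (5 - n)) * w) / s^2 - w / (2 * s^2)
      + (5 - n) * (s * w) / s + (s * w) / (2 * s ^ 3) - (s * w) * V / s
      - 2 * (n - 2) * V / s^2 + (n - 2) * V^2 / s^2 = 0"
  using s by (simp add: field_simps power2_eq_square power3_eq_cube)



lemma verify:
  fixes w :: "real \<Rightarrow> real" and N :: nat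
  assumes w: "continuous_on UNIV w" and L: "L > 0"
    and fx: "\<And>x. x \<in> {0..L} \<Longrightarrow> w x = Aop (rhoh (real N) M w) x"
  shows "local_solution N M L (Vw M w)"
proof -
  define n where "n = real N"
  define J where "J = (\<lambda>s. integral {0..s} (\<lambda>t. kd t * rhoh n M w t))"
  define V2 where "V2 = (\<lambda>s. rho n M w s / s^2 - w s / (2 * s^2))"
  have Veq: "Vw M w = (\<lambda>s. M + integral {0..s} (\<lambda>t. t * w t))" by (rule ext) (simp add: Vw_def)
  have c1: "continuous_on {0..L} (Vw M w)" by (rule Vw_cont[OF w])
  have V0: "Vw M w 0 = M" by (simp add: Vw_def)
  have dV: "(Vw M w has_real_derivative s * w s) (at s)" if s: "s \<in> {0<..<L}" for s
  proof -
    have "((\<lambda>x. integral {0..x} (\<lambda>t. t * w t)) has_real_derivative s * w s) (at s within {0..L})"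
      by (rule integral_has_real_derivative[OF cont_tw[OF w]]) (use s in auto)
    moreover have "at s within {0..L} = at s" by (rule at_within_interior) (use s in simp)
    ultimately have "((\<lambda>x. integral {0..x} (\<lambda>t. t * w t)) has_real_derivative s * w s) (at s)" by simp
    then have "((\<lambda>x. M + integral {0..x} (\<lambda>t. t * w t)) has_real_derivative 0 + s * w s) (at s)"
      by (rule DERIV_add[OF DERIV_const])
    then show ?thesis by (simp add: Veq)
  qed
  have wJ: "w x = J x / kh x" if x: "x \<in> {0<..<L}" for x
    using fx[of x] x by (simp add: Aop_def J_def n_def)
  have dV1: "((\<lambda>s. s * w s) has_real_derivative V2 s) (at s)" if s: "s \<in> {0<..<L}" for s
  proof -
    have s0: "s > 0" using s by simp
    have cr: "continuous_on {0..L} (\<lambda>t. kd t * rhoh n M w t)" by (rule cont_kd_mult[OF rhoh_cont[OF w]])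
    have dJ0: "(J has_real_derivative kd s * rhoh n M w s) (at s within {0..L})"
      unfolding J_def by (rule integral_has_real_derivative[OF cr]) (use s in auto)
    have "at s within {0..L} = at s" by (rule at_within_interior) (use s in simp)
    then have dJ: "(J has_real_derivative kd s * rhoh n M w s) (at s)" using dJ0 by simp
    have dh: "(kh has_real_derivative kd s) (at s)" using kh_deriv s0 by simp
    have hs: "kh s \<noteq> 0" using kh_pos[OF s0] by simp
    have d: "((\<lambda>x. x * (J x / kh x)) has_real_derivative
        1 * (J s / kh s) + ((kd s * rhoh n M w s * kh s - J s * kd s) / (kh s * kh s)) * s) (at s)"
      by (rule DERIV_mult[OF DERIV_ident DERIV_divide[OF dJ dh hs]])
    have eqv: "1 * (J s / kh s) + ((kd s * rhoh n M w s * kh s - J s * kd s) / (kh s * kh s)) * s = V2 s"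
    proof -
      define e where "e = exp (- 1 / (4 * s ^ 2))"
      have e0: "e > 0" by (simp add: e_def)
      have kds: "kd s = e * (1 + 1 / (2 * s ^ 2))" using s0 by (simp add: kd_def e_def)
      have khs: "kh s = s * e" by (simp add: kh_def e_def)
      have ws: "w s = J s / (s * e)" using wJ[OF s] khs by simp
      show ?thesis unfolding kds khs rhoh_def V2_def ws by (rule alg_deriv[OF s0 e0])
    qed
    have tr: "x * (J x / kh x) = x * w x" if x: "x \<in> {0<..<L}" for x
      using wJ[OF x] by simp
    show ?thesis
      by (rule has_field_derivative_transform_within_open[OF d[unfolded eqv] open_greaterThanLessThan s tr])
  qed
  have cV2: "continuous_on {0<..<L} V2"
  proof -
    have r: "continuous_on {0<..<L} (rho n M w)"
      by (rule continuous_on_subset[OF rho_cont[OF w, where L=L]]) auto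
    have w': "continuous_on {0<..<L} w" by (rule continuous_on_subset[OF w]) auto
    show ?thesis unfolding V2_def
      by (intro continuous_intros r w') auto
  qed
  have eq: "V2 s + (5 - real N) * (s * w s) / s + (s * w s) / (2 * s ^ 3) - (s * w s) * Vw M w s / s
      - 2 * (real N - 2) * Vw M w s / s\<^sup>2 + (real N - 2) * (Vw M w s)\<^sup>2 / s\<^sup>2 = 0"
    if s: "s \<in> {0<..<L}" for s
  proof -
    have s0: "s > 0" using s by simp
    show ?thesis unfolding V2_def rho_def n_def by (rule alg_eq[OF s0])
  qed
  show ?thesis
    unfolding local_solution_def
    apply (intro conjI L c1 V0)
    apply (rule exI[of _ "\<lambda>s. s * w s"], rule exI[of _ V2])
    using dV dV1 cV2 eq by auto
qed



lemma frac_le: "(0::real) < Z \<Longrightarrow> a \<le> b * Z \<Longrightarrow> a / Z \<le> b"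
  by (simp add: pos_divide_le_eq)

lemma main_exists:
  fixes N :: nat and M :: real
  assumes N: "real N \<ge> 2"
  shows "\<exists>L V. local_solution N M L V"
proof -
  define n where "n = real N"
  define R where "R = 4 * ((n - 2) * (\<bar>M\<bar> + 1) * (\<bar>M\<bar> + 3)) + 1"
  define K where "K = (n - 2) * (2 * \<bar>M\<bar> + 4) + 1 + (\<bar>M\<bar> + 1 + \<bar>5 - n\<bar>)"
  define Q where "Q = \<bar>M\<bar> + 1 + \<bar>5 - n\<bar>"
  define Z where "Z = 4 * K + 4 * Q + R + 1"
  define L where "L = 1 / sqrt Z"
  have c0: "n - 2 \<ge> 0" using N by (simp add: n_def)
  have R1: "R \<ge> 1" using c0 by (simp add: R_def)
  have K0: "K \<ge> 0" using c0 by (simp add: K_def)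
  have Q0: "Q \<ge> 0" by (simp add: Q_def)
  have Z1: "Z \<ge> 1" using K0 Q0 R1 unfolding Z_def by linarith
  have Zp: "Z > 0" using Z1 by simp
  have Lpos: "L > 0" using Z1 by (simp add: L_def)
  have L2: "L^2 = 1 / Z" using Z1 by (simp add: L_def power_divide)
  have LR: "L^2 * R \<le> 1" unfolding L2 using frac_le[OF Zp, of R 1] K0 Q0 unfolding Z_def by simp
  have LQ: "L^2 * (\<bar>M\<bar> + 1 + \<bar>5 - n\<bar>) \<le> 1/4"
    unfolding L2 Q_def[symmetric] using frac_le[OF Zp, of Q "1/4"] K0 R1 unfolding Z_def by simp
  have LK: "4 * L^2 * K \<le> 1"
    unfolding L2 using frac_le[OF Zp, of "4 * K" 1] Q0 R1 unfolding Z_def by simp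
  have t2: "t^2 \<le> L^2" if "t \<in> {0..L}" for t
    using that by (intro power_mono) auto
  define X where "X = cball (0 :: real \<Rightarrow>\<^sub>C real) R"
  define T where "T = (\<lambda>w :: real \<Rightarrow>\<^sub>C real. Bcontfun (Tfun n M L (apply_bcontfun w)))"
  have wc: "continuous_on UNIV (apply_bcontfun w)" for w :: "real \<Rightarrow>\<^sub>C real" by simp
  have wb: "\<bar>apply_bcontfun w x\<bar> \<le> R" if "w \<in> X" for w x
    using norm_bounded[of w x] that unfolding X_def by simp
  have Vb: "\<bar>Vw M (apply_bcontfun w) t - M\<bar> \<le> 1" if w: "w \<in> X" and t: "t \<in> {0..L}" for w t
  proof -
    have "\<bar>Vw M (apply_bcontfun w) t - M\<bar> \<le> t * t * R"
      by (rule Vw_bound[OF wc wb[OF w]]) (use t in auto)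
    also have "\<dots> = t^2 * R" by (simp add: power2_eq_square)
    also have "\<dots> \<le> L^2 * R" by (rule mult_right_mono[OF t2[OF t]]) (use R1 in auto)
    finally show ?thesis using LR by linarith
  qed
  have rb: "\<bar>rhoh n M (apply_bcontfun w) t\<bar> \<le> R" if w: "w \<in> X" and t: "t \<in> {0..L}" for w t
    unfolding rhoh_def rho_def
    by (rule rho_bound[OF c0 Vb[OF w t] wb[OF w] t2[OF t] LQ R_def])
  have Tb: "\<bar>Tfun n M L (apply_bcontfun w) x\<bar> \<le> R" if w: "w \<in> X" for w x
  proof -
    have s: "clampL L x \<in> {0..L}" using clamp_in Lpos by simp
    show ?thesis unfolding Tfun_def
    proof (rule A_bound)
      show "continuous_on {0..clampL L x} (rhoh n M (apply_bcontfun w))"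
        by (rule continuous_on_subset[OF rhoh_cont[OF wc, where L=L]]) (use s in auto)
      show "0 \<le> clampL L x" using s by auto
      fix t assume "t \<in> {0..clampL L x}"
      then have "t \<in> {0..L}" using s by auto
      then show "\<bar>rhoh n M (apply_bcontfun w) t\<bar> \<le> R" by (rule rb[OF w])
    qed
  qed
  have Tmem: "Tfun n M L (apply_bcontfun w) \<in> bcontfun" if w: "w \<in> X" for w
    by (rule bcontfun_normI[OF Tfun_cont[OF wc]]) (use Lpos Tb[OF w] in auto)
  have Tapp: "apply_bcontfun (T w) = Tfun n M L (apply_bcontfun w)" if w: "w \<in> X" for w
    unfolding T_def using Tmem[OF w] by (rule Bcontfun_inverse)
  have TX: "T ` X \<subseteq> X"
  proof
    fix y assume "y \<in> T ` X"
    then obtain w where w: "w \<in> X" and y: "y = T w" by blast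
    have "norm (T w) \<le> R"
      by (rule norm_bound) (use Tb[OF w] Tapp[OF w] in simp)
    then show "y \<in> X" using y by (simp add: X_def)
  qed
  have contr: "dist (T w1) (T w2) \<le> (1/2) * dist w1 w2" if w1: "w1 \<in> X" and w2: "w2 \<in> X" for w1 w2
  proof (rule dist_bound)
    fix x
    define D where "D = dist w1 w2"
    define f1 where "f1 = apply_bcontfun w1"
    define f2 where "f2 = apply_bcontfun w2"
    have dw: "\<bar>f1 y - f2 y\<bar> \<le> D" for y
      using dist_bounded[of w1 y w2] by (simp add: D_def f1_def f2_def dist_real_def)
    have s: "clampL L x \<in> {0..L}" using clamp_in Lpos by simp
    have cs1: "continuous_on {0..clampL L x} (rhoh n M f1)" unfolding f1_def
      by (rule continuous_on_subset[OF rhoh_cont[OF wc, where L=L]]) (use s in auto)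
    have cs2: "continuous_on {0..clampL L x} (rhoh n M f2)" unfolding f2_def
      by (rule continuous_on_subset[OF rhoh_cont[OF wc, where L=L]]) (use s in auto)
    have "Aop (\<lambda>t. rhoh n M f1 t - rhoh n M f2 t) (clampL L x)
        = Aop (rhoh n M f1) (clampL L x) - Aop (rhoh n M f2) (clampL L x)"
      by (rule A_diff[OF cs1 cs2])
    moreover have "\<bar>Aop (\<lambda>t. rhoh n M f1 t - rhoh n M f2 t) (clampL L x)\<bar> \<le> D / 2"
    proof (rule A_bound)
      show "continuous_on {0..clampL L x} (\<lambda>t. rhoh n M f1 t - rhoh n M f2 t)"
        by (rule continuous_on_diff[OF cs1 cs2])
      show "0 \<le> clampL L x" using s by auto
      fix t assume "t \<in> {0..clampL L x}"
      then have t: "t \<in> {0..L}" using s by auto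
      have dV: "\<bar>Vw M f1 t - Vw M f2 t\<bar> \<le> t^2 * D"
        using Vw_diff[OF wc[of w1] wc[of w2], of D t M] dw t
        by (simp add: f1_def f2_def power2_eq_square)
      show "\<bar>rhoh n M f1 t - rhoh n M f2 t\<bar> \<le> D / 2"
        unfolding rhoh_def rho_def
        by (rule rho_contr[OF c0 Vb[OF w1 t, folded f1_def] Vb[OF w2 t, folded f2_def]
              wb[OF w1, folded f1_def] dV dw t2[OF t] LR K_def LK])
    qed
    ultimately have "\<bar>Tfun n M L f1 x - Tfun n M L f2 x\<bar> \<le> D / 2"
      by (simp add: Tfun_def)
    then show "dist (T w1 x) (T w2 x) \<le> 1 / 2 * dist w1 w2"
      using Tapp[OF w1] Tapp[OF w2] by (simp add: dist_real_def D_def f1_def f2_def)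
  qed
  have "\<exists>!w\<in>X. T w = w"
  proof (rule Banach_fix[where c="1/2"])
    show "complete X" unfolding X_def by (simp add: complete_eq_closed)
    show "X \<noteq> {}" using R1 unfolding X_def by (metis cball_eq_empty linorder_not_less zero_le_one order_trans)
  qed (use TX contr in auto)
  then obtain w where w: "w \<in> X" "T w = w" by blast
  have fx: "apply_bcontfun w x = Aop (rhoh (real N) M (apply_bcontfun w)) x" if "x \<in> {0..L}" for x
  proof -
    have "apply_bcontfun w x = apply_bcontfun (T w) x" using w(2) by simp
    also have "\<dots> = Tfun n M L (apply_bcontfun w) x" using Tapp[OF w(1)] by simp
    also have "\<dots> = Aop (rhoh n M (apply_bcontfun w)) x" using that by (simp add: Tfun_def clamp_id)
    finally show ?thesis by (simp add: n_def)
  qed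
  show ?thesis using verify[OF wc Lpos fx] by blast
qed


theorem theorem3p1:
  fixes N :: nat
  assumes "N \<ge> 3"
  shows "\<exists>S :: real set. S \<subseteq> {0<..} \<and> {0<..} \<subseteq> closure S \<and>
           (\<forall>M\<in>S. \<exists>L V. local_solution N M L V)"
proof -
  have N2: "real N \<ge> 2" using assms by simp
  have "\<forall>M\<in>{0<..}. \<exists>L V. local_solution N M L V"
    using main_exists[OF N2] by blast
  then show ?thesis
    by (intro exI[of _ "{0<..}"] conjI subset_refl closure_subset)
qed

end
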